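(* Let $n=m+1$, $m\ge2$, and let $\Phi(x)=|x_h|^4+4x_v^2$ for $x=(x_h,x_v)\in\mathbb R^m\times\mathbb R$. For constants $c,r\in\mathbb R$ let $u(x,t)=ct-\Phi(x)+r$. Then at every point with $x_h\ne0$, $$u_t-\operatorname{tr}\Big(X^2u-\frac{X^2u\,Xu\otimes Xu}{|Xu|^2}\Big)=c+4n|x_h|^2 .$$ Consequently: (i) if $c\ge0$, $u$ is a viscosity supersolution of the horizontal mean curvature flow equation in $\mathbb R^n\times(0,+\infty)$; (ii) if $c<0$, $u$ is a viscosity subsolution of that equation in the open set $\{(x,t):|x_h|<\sqrt{-c/(4n)},\ t>0\}$.
   Context: Heisenberg-like group: $\mathbb R^n=\mathbb R^m\times\mathbb R$, $x=(x_h,x_v)$, with a single $m\times m$ matrix $B$ satisfying ${}^tB=-B=B^{-1}$. Let $\sigma(x)$ be the $n\times m$ matrix with first $m$ rows $I_m$ and last row ${}^t(Bx_h)$; vector fields $X_j=\sum_i\sigma_{ij}(x)\partial_i$. For $u\in C^2$, $Xu=\nabla u\,\sigma(x)$ and $X^2u={}^t\sigma(x)D^2u\,\sigma(x)$ (derivatives in $x$ only). Horizontal mean curvature flow equation: $u_t+F(Xu,X^2u)=0$ with $F(q,A)=-\operatorname{tr}[(I_m-\frac{q}{|q|}\otimes\frac{q}{|q|})A]$, $q\ne0$. Viscosity sub/supersolutions on an open set $\mathcal O\subset\mathbb R^n\times(0,\infty)$: an upper (lower) semicontinuous $u$ is a subsolution (supersolution) if for every $\phi\in C^2$ and every local maximum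 (minimum) point $(x,t)\in\mathcal O$ of $u-\phi$, $\phi_t+G_*(x,t,\nabla\phi,D^2\phi)\le0$ (resp. $\phi_t+G^*(x,t,\nabla\phi,D^2\phi)\ge0$), where $G(x,t,p,A)=F(p\sigma(x),{}^t\sigma(x)A\sigma(x))$ for $p\sigma(x)\ne0$ and $G_*,G^*$ are its lower/upper semicontinuous envelopes on all of $\mathbb R^n\times(0,\infty)\times\mathbb R^n\times\mathcal S^n$. *)

theory Defs
  imports "HOL-Analysis.Analysis"
begin

text \<open>Spatial points of R^n = R^m x R are vectors indexed by the type 'm option:
  index Some i (i :: 'm) is the horizontal coordinate i, index None is the vertical
  coordinate. Thus n = CARD('m option) = CARD('m) + 1. Space-time functions are
  curried: u x t.\<close>

definition hpart :: "real^('m::finite option) \<Rightarrow> real^'m" where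
  "hpart x = (\<chi> i. x $ Some i)"

definition vpart :: "real^('m::finite option) \<Rightarrow> real" where
  "vpart x = x $ None"

definition sigma :: "real^'m^'m \<Rightarrow> real^('m::finite option) \<Rightarrow> real^'m^('m option)" where
  "sigma B x = (\<chi> k j. case k of Some i \<Rightarrow> (if i = j then 1 else 0)
                                | None \<Rightarrow> (B *v hpart x) $ j)"

definition outer :: "real^'k \<Rightarrow> real^'k^'k" where
  "outer q = (\<chi> i j. q $ i * q $ j)"

definition dtime :: "(real^'n \<Rightarrow> real \<Rightarrow> real) \<Rightarrow> real^'n \<Rightarrow> real \<Rightarrow> real" where
  "dtime u x t = deriv (\<lambda>s. u x s) t"

definition grad :: "(real^'n \<Rightarrow> real \<Rightarrow> real) \<Rightarrow> real^'n \<Rightarrow> real \<Rightarrow> real^'n" where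
  "grad u x t = (\<chi> i. deriv (\<lambda>s. u (x + s *\<^sub>R axis i 1) t) 0)"

definition hess :: "(real^'n \<Rightarrow> real \<Rightarrow> real) \<Rightarrow> real^'n \<Rightarrow> real \<Rightarrow> real^'n^'n" where
  "hess u x t = (\<chi> i j. deriv (\<lambda>s. grad u (x + s *\<^sub>R axis j 1) t $ i) 0)"

definition Xh :: "real^'m^'m \<Rightarrow> (real^('m::finite option) \<Rightarrow> real \<Rightarrow> real) \<Rightarrow> real^('m option) \<Rightarrow> real \<Rightarrow> real^'m" where
  "Xh B u x t = grad u x t v* sigma B x"

definition X2h :: "real^'m^'m \<Rightarrow> (real^('m::finite option) \<Rightarrow> real \<Rightarrow> real) \<Rightarrow> real^('m option) \<Rightarrow> real \<Rightarrow> real^'m^'m" where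
  "X2h B u x t = transpose (sigma B x) ** hess u x t ** sigma B x"

definition Fmc :: "real^'m \<Rightarrow> real^'m^'m \<Rightarrow> real" where
  "Fmc q A = - trace ((mat 1 - outer (q /\<^sub>R norm q)) ** A)"

type_synonym 'm jet = "(real^('m option)) \<times> real \<times> (real^('m option)) \<times> (real^('m option)^('m option))"

definition Gdom :: "real^'m^'m \<Rightarrow> ('m::finite) jet set" where
  "Gdom B = {(x, t, p, A). 0 < t \<and> p v* sigma B x \<noteq> 0 \<and> transpose A = A}"

definition Gop :: "real^'m^'m \<Rightarrow> ('m::finite) jet \<Rightarrow> real" where
  "Gop B z = (case z of (x, t, p, A) \<Rightarrow>
      Fmc (p v* sigma B x) (transpose (sigma B x) ** A ** sigma B x))"

definition G_lower :: "real^'m^'m \<Rightarrow> ('m::finite) jet \<Rightarrow> real" where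
  "G_lower B z = (SUP e\<in>{0<..}. INF w\<in>{w \<in> Gdom B. dist w z < e}. Gop B w)"

definition G_upper :: "real^'m^'m \<Rightarrow> ('m::finite) jet \<Rightarrow> real" where
  "G_upper B z = (INF e\<in>{0<..}. SUP w\<in>{w \<in> Gdom B. dist w z < e}. Gop B w)"

definition C2_on :: "((real^'n) \<times> real) set \<Rightarrow> (real^'n \<Rightarrow> real \<Rightarrow> real) \<Rightarrow> bool" where
  "C2_on S \<phi> \<longleftrightarrow> (\<exists>D D2. (\<forall>z\<in>S. ((\<lambda>(y, s). \<phi> y s) has_derivative blinfun_apply (D z)) (at z))
       \<and> (\<forall>z\<in>S. (D has_derivative blinfun_apply (D2 z)) (at z))
       \<and> continuous_on S D2)"

definition usc_on :: "((real^'n) \<times> real) set \<Rightarrow> (real^'n \<Rightarrow> real \<Rightarrow> real) \<Rightarrow> bool" where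
  "usc_on S u \<longleftrightarrow> (\<forall>z\<in>S. \<forall>a. (\<lambda>(y, s). u y s) z < a \<longrightarrow>
      eventually (\<lambda>w. (\<lambda>(y, s). u y s) w < a) (at z within S))"

definition lsc_on :: "((real^'n) \<times> real) set \<Rightarrow> (real^'n \<Rightarrow> real \<Rightarrow> real) \<Rightarrow> bool" where
  "lsc_on S u \<longleftrightarrow> (\<forall>z\<in>S. \<forall>a. a < (\<lambda>(y, s). u y s) z \<longrightarrow>
      eventually (\<lambda>w. a < (\<lambda>(y, s). u y s) w) (at z within S))"

definition local_max_on :: "('a::metric_space) set \<Rightarrow> ('a \<Rightarrow> real) \<Rightarrow> 'a \<Rightarrow> bool" where
  "local_max_on S f z \<longleftrightarrow> (\<exists>e>0. \<forall>w\<in>S. dist w z < e \<longrightarrow> f w \<le> f z)"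

definition local_min_on :: "('a::metric_space) set \<Rightarrow> ('a \<Rightarrow> real) \<Rightarrow> 'a \<Rightarrow> bool" where
  "local_min_on S f z \<longleftrightarrow> (\<exists>e>0. \<forall>w\<in>S. dist w z < e \<longrightarrow> f z \<le> f w)"

definition visc_sub :: "real^'m^'m \<Rightarrow> (real^('m::finite option) \<Rightarrow> real \<Rightarrow> real) \<Rightarrow> ((real^('m option)) \<times> real) set \<Rightarrow> bool" where
  "visc_sub B u S \<longleftrightarrow> usc_on S u \<and>
     (\<forall>\<phi> x t. C2_on S \<phi> \<and> (x, t) \<in> S \<and> local_max_on S (\<lambda>(y, s). u y s - \<phi> y s) (x, t)
        \<longrightarrow> dtime \<phi> x t + G_lower B (x, t, grad \<phi> x t, hess \<phi> x t) \<le> 0)"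

definition visc_super :: "real^'m^'m \<Rightarrow> (real^('m::finite option) \<Rightarrow> real \<Rightarrow> real) \<Rightarrow> ((real^('m option)) \<times> real) set \<Rightarrow> bool" where
  "visc_super B u S \<longleftrightarrow> lsc_on S u \<and>
     (\<forall>\<phi> x t. C2_on S \<phi> \<and> (x, t) \<in> S \<and> local_min_on S (\<lambda>(y, s). u y s - \<phi> y s) (x, t)
        \<longrightarrow> dtime \<phi> x t + G_upper B (x, t, grad \<phi> x t, hess \<phi> x t) \<ge> 0)"

end

theory Submission
  imports Defs
begin

lemma L1D:
  fixes f :: "'a::real_normed_vector \<Rightarrow> real"
  assumes "(f has_derivative F) (at (a + \<tau> *\<^sub>R h))"
  shows "((\<lambda>s. f (a + s *\<^sub>R h)) has_real_derivative F h) (at \<tau>)"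
proof -
  have lin: "linear F" using assms has_derivative_linear by blast
  have d1: "((\<lambda>s. a + s *\<^sub>R h) has_derivative (\<lambda>s. s *\<^sub>R h)) (at \<tau>)"
    by (auto intro!: derivative_eq_intros)
  have "((\<lambda>s. f (a + s *\<^sub>R h)) has_derivative (\<lambda>s. F (s *\<^sub>R h))) (at \<tau>)"
    using has_derivative_compose[OF d1 assms] by simp
  moreover have "(\<lambda>s. F (s *\<^sub>R h)) = (*) (F h)"
    using linear_scale[OF lin] by (auto simp: fun_eq_iff)
  ultimately show ?thesis by (simp add: has_field_derivative_def)
qed

lemma Sch1:
  fixes f :: "'a::real_normed_vector \<Rightarrow> real"
  assumes U: "open U" "x \<in> U" and d: "\<forall>y\<in>U. (f has_derivative f' y) (at y)"
   and d2: "((\<lambda>y. f' y h) has_derivative (\<lambda>w. ff w h)) (at x)" and e: "\<epsilon> > 0"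
  shows "\<exists>s0>0. \<forall>s. 0 < s \<and> s < s0 \<longrightarrow>
    \<bar>f (x + s *\<^sub>R h + s *\<^sub>R k) - f (x + s *\<^sub>R h) - f (x + s *\<^sub>R k) + f x - s^2 * ff k h\<bar>
      \<le> 2 * \<epsilon> * s^2 * (norm h + norm k)"
proof -
  obtain r where r: "r > 0" "ball x r \<subseteq> U" using U open_contains_ball by blast
  have lin2: "linear (\<lambda>w. ff w h)" using d2 has_derivative_linear by blast
  obtain \<delta> where \<delta>: "\<delta> > 0" "\<forall>y. norm (y - x) < \<delta> \<longrightarrow>
       norm (f' y h - f' x h - ff (y - x) h) \<le> \<epsilon> * norm (y - x)"
    using d2 e unfolding has_derivative_at_alt by blast
  define M where "M = norm h + norm k"
  define s0 where "s0 = min r \<delta> / (M + 1)"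
  have M0: "M \<ge> 0" by (simp add: M_def)
  have s0: "s0 > 0" using r \<delta> M0 by (simp add: s0_def)
  show ?thesis
  proof (intro exI[of _ s0] conjI allI impI s0)
    fix s assume s: "0 < s \<and> s < s0"
    have sM: "s * M < min r \<delta>"
    proof -
      have "s * M \<le> s * (M + 1)" using s by simp
      also have "\<dots> < s0 * (M + 1)" using s M0 by (intro mult_strict_right_mono) auto
      also have "\<dots> = min r \<delta>" using M0 by (simp add: s0_def)
      finally show ?thesis .
    qed
    have nb: "norm (\<tau> *\<^sub>R h + \<sigma> *\<^sub>R k) \<le> s * M" if "0 \<le> \<tau>" "\<tau> \<le> s" "0 \<le> \<sigma>" "\<sigma> \<le> s" for \<tau> \<sigma>
    proof -
      have "norm (\<tau> *\<^sub>R h + \<sigma> *\<^sub>R k) \<le> \<tau> * norm h + \<sigma> * norm k"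
        using norm_triangle_ineq[of "\<tau> *\<^sub>R h" "\<sigma> *\<^sub>R k"] that by simp
      also have "\<dots> \<le> s * norm h + s * norm k"
        using that by (intro add_mono mult_right_mono) auto
      finally show ?thesis by (simp add: M_def algebra_simps)
    qed
    define g where "g \<tau> = f ((x + s *\<^sub>R k) + \<tau> *\<^sub>R h) - f (x + \<tau> *\<^sub>R h)" for \<tau>
    have inU: "x + (\<tau> *\<^sub>R h + \<sigma> *\<^sub>R k) \<in> U" if "0 \<le> \<tau>" "\<tau> \<le> s" "0 \<le> \<sigma>" "\<sigma> \<le> s" for \<tau> \<sigma>
    proof -
      have "norm (\<tau> *\<^sub>R h + \<sigma> *\<^sub>R k) < r" using nb[OF that] sM by simp
      then have "x + (\<tau> *\<^sub>R h + \<sigma> *\<^sub>R k) \<in> ball x r" by (simp add: dist_norm norm_minus_commute[of "\<tau> *\<^sub>R h + \<sigma> *\<^sub>R k" 0, simplified] diff_conv_add_uminus[symmetric] minus_add_distrib[symmetric])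
      then show ?thesis using r by blast
    qed
    have dg: "DERIV g \<tau> :> f' ((x + s *\<^sub>R k) + \<tau> *\<^sub>R h) h - f' (x + \<tau> *\<^sub>R h) h"
      if "0 \<le> \<tau>" "\<tau> \<le> s" for \<tau>
    proof -
      have a: "x + s *\<^sub>R k + \<tau> *\<^sub>R h \<in> U" using inU[of \<tau> s] that s by (simp add: add_ac)
      have b: "x + \<tau> *\<^sub>R h \<in> U" using inU[of \<tau> 0] that s by simp
      show ?thesis unfolding g_def
        by (intro DERIV_diff L1D) (use a b d in auto)
    qed
    obtain \<theta> where th: "0 < \<theta>" "\<theta> < s" and mvt:
      "g s - g 0 = (s - 0) * (f' ((x + s *\<^sub>R k) + \<theta> *\<^sub>R h) h - f' (x + \<theta> *\<^sub>R h) h)"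
      using MVT2[of 0 s g "\<lambda>\<tau>. f' ((x + s *\<^sub>R k) + \<tau> *\<^sub>R h) h - f' (x + \<tau> *\<^sub>R h) h"] dg s by auto
    define y1 where "y1 = x + s *\<^sub>R k + \<theta> *\<^sub>R h"
    define y2 where "y2 = x + \<theta> *\<^sub>R h"
    have n1: "norm (y1 - x) \<le> s * M" using nb[of \<theta> s] th by (simp add: y1_def add_ac)
    have n2: "norm (y2 - x) \<le> s * M" using nb[of \<theta> 0] th by (simp add: y2_def)
    have e1: "\<bar>f' y1 h - f' x h - ff (y1 - x) h\<bar> \<le> \<epsilon> * (s * M)"
      using \<delta>(2)[rule_format, of y1] n1 sM e
      by (smt (verit, best) min.strict_boundedE mult_left_mono real_norm_def)
    have e2: "\<bar>f' y2 h - f' x h - ff (y2 - x) h\<bar> \<le> \<epsilon> * (s * M)"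
      using \<delta>(2)[rule_format, of y2] n2 sM e
      by (smt (verit, best) min.strict_boundedE mult_left_mono real_norm_def)
    have lin: "ff (y1 - x) h - ff (y2 - x) h = s * ff k h"
    proof -
      have "y1 - x = s *\<^sub>R k + (y2 - x)" by (simp add: y1_def y2_def)
      then have "ff (y1 - x) h = ff (s *\<^sub>R k) h + ff (y2 - x) h" using linear_add[OF lin2] by metis
      then show ?thesis using linear_scale[OF lin2] by simp
    qed
    have est: "\<bar>f' y1 h - f' y2 h - s * ff k h\<bar> \<le> 2 * \<epsilon> * (s * M)"
      using e1 e2 lin by linarith
    have "g s - g 0 = f (x + s *\<^sub>R h + s *\<^sub>R k) - f (x + s *\<^sub>R h) - f (x + s *\<^sub>R k) + f x"
      by (simp add: g_def add_ac)
    then have "f (x + s *\<^sub>R h + s *\<^sub>R k) - f (x + s *\<^sub>R h) - f (x + s *\<^sub>R k) + f x - s^2 * ff k h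
        = s * (f' y1 h - f' y2 h - s * ff k h)"
      using mvt by (simp add: y1_def y2_def power2_eq_square algebra_simps)
    then have "\<bar>f (x + s *\<^sub>R h + s *\<^sub>R k) - f (x + s *\<^sub>R h) - f (x + s *\<^sub>R k) + f x - s^2 * ff k h\<bar>
        = s * \<bar>f' y1 h - f' y2 h - s * ff k h\<bar>" using s by (simp add: abs_mult)
    also have "\<dots> \<le> s * (2 * \<epsilon> * (s * M))" using est s by (intro mult_left_mono) auto
    finally show "\<bar>f (x + s *\<^sub>R h + s *\<^sub>R k) - f (x + s *\<^sub>R h) - f (x + s *\<^sub>R k) + f x - s^2 * ff k h\<bar>
      \<le> 2 * \<epsilon> * s^2 * (norm h + norm k)" by (simp add: M_def power2_eq_square algebra_simps)
  qed
qed

lemma Schwarz: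
  fixes f :: "'a::real_normed_vector \<Rightarrow> real"
  assumes U: "open U" "x \<in> U" and d: "\<forall>y\<in>U. (f has_derivative f' y) (at y)"
   and dh: "((\<lambda>y. f' y h) has_derivative (\<lambda>w. ff w h)) (at x)"
   and dk: "((\<lambda>y. f' y k) has_derivative (\<lambda>w. ff w k)) (at x)"
  shows "ff k h = ff h k"
proof (rule ccontr)
  assume ne: "ff k h \<noteq> ff h k"
  define D where "D = \<bar>ff k h - ff h k\<bar>"
  define N where "N = norm h + norm k"
  have D0: "D > 0" using ne by (simp add: D_def)
  have N0: "N \<ge> 0" by (simp add: N_def)
  define \<epsilon> where "\<epsilon> = D / (8 * (N + 1))"
  have e0: "\<epsilon> > 0" using D0 N0 by (simp add: \<epsilon>_def)
  obtain s1 where s1: "s1 > 0" "\<forall>s. 0 < s \<and> s < s1 \<longrightarrow>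
    \<bar>f (x + s *\<^sub>R h + s *\<^sub>R k) - f (x + s *\<^sub>R h) - f (x + s *\<^sub>R k) + f x - s^2 * ff k h\<bar>
      \<le> 2 * \<epsilon> * s^2 * (norm h + norm k)"
    using Sch1[where f=f and f'=f' and ff=ff and h=h and k=k, OF U d dh e0] by blast
  obtain s2 where s2: "s2 > 0" "\<forall>s. 0 < s \<and> s < s2 \<longrightarrow>
    \<bar>f (x + s *\<^sub>R k + s *\<^sub>R h) - f (x + s *\<^sub>R k) - f (x + s *\<^sub>R h) + f x - s^2 * ff h k\<bar>
      \<le> 2 * \<epsilon> * s^2 * (norm k + norm h)"
    using Sch1[where f=f and f'=f' and ff=ff and h=k and k=h, OF U d dk e0] by blast
  define s where "s = min s1 s2 / 2"
  have s: "0 < s" "s < s1" "s < s2" using s1 s2 by (auto simp: s_def)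
  define \<Delta> where "\<Delta> = f (x + s *\<^sub>R h + s *\<^sub>R k) - f (x + s *\<^sub>R h) - f (x + s *\<^sub>R k) + f x"
  have a1: "\<bar>\<Delta> - s^2 * ff k h\<bar> \<le> 2 * \<epsilon> * s^2 * N"
    using s1(2)[rule_format, of s] s by (simp add: \<Delta>_def N_def)
  have a2: "\<bar>\<Delta> - s^2 * ff h k\<bar> \<le> 2 * \<epsilon> * s^2 * N"
    using s2(2)[rule_format, of s] s by (simp add: \<Delta>_def N_def add_ac)
  have "s^2 * D = \<bar>(\<Delta> - s^2 * ff h k) - (\<Delta> - s^2 * ff k h)\<bar>"
  proof -
    have "\<bar>(\<Delta> - s^2 * ff h k) - (\<Delta> - s^2 * ff k h)\<bar> = \<bar>s^2 * (ff k h - ff h k)\<bar>"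
      by (simp add: algebra_simps)
    also have "\<dots> = s^2 * D" by (simp add: abs_mult D_def)
    finally show ?thesis by simp
  qed
  also have "\<dots> \<le> 4 * \<epsilon> * s^2 * N" using a1 a2 by linarith
  finally have "s^2 * D \<le> s^2 * (4 * \<epsilon> * N)" by (simp add: algebra_simps)
  then have "D \<le> 4 * \<epsilon> * N" using s by (simp add: mult_le_cancel_left)
  also have "\<dots> = D * N / (2 * (N + 1))" using N0 by (simp add: \<epsilon>_def field_simps)
  also have "\<dots> < D" using D0 N0 by (simp add: field_simps add_nonneg_pos)
  finally show False by simp
qed

lemma first_order_min:
  fixes f :: "'a::real_normed_vector \<Rightarrow> real"
  assumes d: "(f has_derivative F) (at x)"
    and mn: "\<exists>e>0. \<forall>y. dist y x < e \<longrightarrow> f x \<le> f y"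
  shows "F w = 0"
proof -
  obtain e where e: "e > 0" "\<forall>y. dist y x < e \<longrightarrow> f x \<le> f y" using mn by blast
  have D: "((\<lambda>s. f (x + s *\<^sub>R w)) has_real_derivative F w) (at 0)"
    using L1D[of f F x 0 w] d by simp
  show ?thesis
  proof (rule DERIV_local_min[OF D, of "e / (norm w + 1)"])
    show "0 < e / (norm w + 1)" using e by (simp add: add_nonneg_pos)
    show "\<forall>y. \<bar>0 - y\<bar> < e / (norm w + 1) \<longrightarrow> f (x + 0 *\<^sub>R w) \<le> f (x + y *\<^sub>R w)"
    proof (intro allI impI)
      fix y assume y: "\<bar>0 - y\<bar> < e / (norm w + 1)"
      have np: "norm w + 1 > 0" by (simp add: add_nonneg_pos)
      have "\<bar>y\<bar> * norm w \<le> \<bar>y\<bar> * (norm w + 1)" by (simp add: mult_left_mono)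
      also have "\<dots> < e / (norm w + 1) * (norm w + 1)"
        using y np by (intro mult_strict_right_mono) auto
      also have "\<dots> = e" using np by simp
      finally have "dist (x + y *\<^sub>R w) x < e" by (simp add: dist_norm)
      then show "f (x + 0 *\<^sub>R w) \<le> f (x + y *\<^sub>R w)" using e by simp
    qed
  qed
qed

lemma second_order_min:
  fixes f :: "'a::real_normed_vector \<Rightarrow> real"
  assumes U: "open U" "x \<in> U" and d: "\<forall>y\<in>U. (f has_derivative f' y) (at y)"
   and d2: "((\<lambda>y. f' y w) has_derivative (\<lambda>v. ff v w)) (at x)"
   and mn: "\<exists>e>0. \<forall>y. dist y x < e \<longrightarrow> f x \<le> f y"
  shows "0 \<le> ff w w"
proof (rule ccontr)
  assume neg: "\<not> 0 \<le> ff w w"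
  have lin2: "linear (\<lambda>v. ff v w)" using d2 has_derivative_linear by blast
  have w0: "w \<noteq> 0" using neg linear_0[OF lin2] by auto
  then have nw: "norm w > 0" by simp
  have fo: "f' x w = 0" using first_order_min[OF _ mn] d U by blast
  obtain e where e: "e > 0" "\<forall>y. dist y x < e \<longrightarrow> f x \<le> f y" using mn by blast
  obtain r where r: "r > 0" "ball x r \<subseteq> U" using U open_contains_ball by blast
  define \<epsilon> where "\<epsilon> = - ff w w / (2 * norm w)"
  have e0: "\<epsilon> > 0" using neg nw by (simp add: \<epsilon>_def field_simps)
  obtain \<delta> where \<delta>: "\<delta> > 0" "\<forall>y. norm (y - x) < \<delta> \<longrightarrow>
       norm (f' y w - f' x w - ff (y - x) w) \<le> \<epsilon> * norm (y - x)"
    using d2 e0 unfolding has_derivative_at_alt by blast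
  define s where "s = min r (min \<delta> e) / (2 * norm w)"
  have s0: "s > 0" unfolding s_def using r \<delta> e nw by (intro divide_pos_pos) auto
  have m0: "min r (min \<delta> e) > 0" using r \<delta> e by simp
  have "s * norm w = min r (min \<delta> e) / 2" using nw by (simp add: s_def)
  then have sw: "s * norm w < min r (min \<delta> e)" using m0 by linarith
  have dg: "DERIV (\<lambda>\<tau>. f (x + \<tau> *\<^sub>R w)) \<tau> :> f' (x + \<tau> *\<^sub>R w) w"
    if "0 \<le> \<tau>" "\<tau> \<le> s" for \<tau>
  proof -
    have "norm (\<tau> *\<^sub>R w) \<le> s * norm w" using that by (simp add: mult_right_mono)
    then have "norm (\<tau> *\<^sub>R w) < r" using sw by simp
    then have "x + \<tau> *\<^sub>R w \<in> ball x r" by (simp add: dist_norm)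
    then have "x + \<tau> *\<^sub>R w \<in> U" using r by blast
    then show ?thesis using L1D d by blast
  qed
  obtain \<theta> where th: "0 < \<theta>" "\<theta> < s" and mvt:
    "f (x + s *\<^sub>R w) - f (x + 0 *\<^sub>R w) = (s - 0) * f' (x + \<theta> *\<^sub>R w) w"
    using MVT2[of 0 s "\<lambda>\<tau>. f (x + \<tau> *\<^sub>R w)" "\<lambda>\<tau>. f' (x + \<tau> *\<^sub>R w) w"] dg s0 by auto
  have "norm (\<theta> *\<^sub>R w) < \<delta>"
  proof -
    have "norm (\<theta> *\<^sub>R w) \<le> s * norm w" using th by (simp add: mult_right_mono)
    then show ?thesis using sw by simp
  qed
  then have "\<bar>f' (x + \<theta> *\<^sub>R w) w - f' x w - ff (\<theta> *\<^sub>R w) w\<bar> \<le> \<epsilon> * norm (\<theta> *\<^sub>R w)"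
    using \<delta>(2)[rule_format, of "x + \<theta> *\<^sub>R w"] by simp
  also have "\<dots> = - \<theta> * ff w w / 2" using th nw by (simp add: \<epsilon>_def field_simps)
  finally have "f' (x + \<theta> *\<^sub>R w) w \<le> \<theta> * ff w w / 2"
    using fo linear_scale[OF lin2, of \<theta> w] by simp
  also have "\<dots> < 0" using th neg by (simp add: mult_pos_neg)
  finally have "s * f' (x + \<theta> *\<^sub>R w) w < 0" using s0 by (simp add: mult_pos_neg)
  then have "f (x + s *\<^sub>R w) < f x" using mvt by simp
  moreover have "dist (x + s *\<^sub>R w) x < e" using sw s0 by (simp add: dist_norm)
  ultimately show False using e by fastforce
qed


lemma deriv_dir:
  fixes f :: "'a::real_normed_vector \<Rightarrow> real"
  assumes "(f has_derivative F) (at x)"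
  shows "deriv (\<lambda>s. f (x + s *\<^sub>R v)) 0 = F v"
  using L1D[of f F x 0 v] assms by (simp add: DERIV_imp_deriv)

lemma deriv_dir_tr:
  fixes G :: "'a::real_normed_vector \<Rightarrow> real"
  assumes "open U" "x \<in> U" "\<forall>y\<in>U. g y = G y" "(G has_derivative F) (at x)"
  shows "deriv (\<lambda>s. g (x + s *\<^sub>R v)) 0 = F v"
proof -
  have "(g has_derivative F) (at x)"
    using has_derivative_transform_within_open[OF assms(4) assms(1,2)] assms(3) by auto
  then show ?thesis by (rule deriv_dir)
qed

lemma lin_expand:
  fixes L :: "real^'n \<Rightarrow> real"
  assumes "linear L"
  shows "L v = (\<Sum>k\<in>UNIV. v$k * L (axis k 1))"
proof -
  have "L v = L (\<Sum>k\<in>UNIV. v$k *\<^sub>R axis k 1)"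
    using basis_expansion[of v] by (simp add: scalar_mult_eq_scaleR)
  also have "\<dots> = (\<Sum>k\<in>UNIV. L (v$k *\<^sub>R axis k 1))"
    by (rule linear_sum[OF assms])
  also have "\<dots> = (\<Sum>k\<in>UNIV. v$k * L (axis k 1))"
    using linear_scale[OF assms] by simp
  finally show ?thesis .
qed

lemma vm_lin:
  fixes L :: "real^'n \<Rightarrow> real" and S :: "real^'m^'n"
  assumes "linear L"
  shows "((\<chi> k. L (axis k 1)) v* S) $ j = L (column j S)"
  using lin_expand[OF assms, of "column j S"]
  by (simp add: vector_matrix_mult_def column_def mult.commute)

lemma mm_bilin:
  fixes Q :: "real^'n \<Rightarrow> real^'n \<Rightarrow> real" and S :: "real^'m^'n"
  assumes l1: "\<And>w. linear (\<lambda>v. Q w v)" and l2: "\<And>v. linear (\<lambda>w. Q w v)"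
  shows "(transpose S ** (\<chi> i j. Q (axis j 1) (axis i 1)) ** S) $ i $ j = Q (column j S) (column i S)"
proof -
  have "Q (column j S) (column i S) = (\<Sum>l\<in>UNIV. S$l$j * Q (axis l 1) (column i S))"
    using lin_expand[OF l2[of "column i S"], of "column j S"] by (simp add: column_def)
  also have "\<dots> = (\<Sum>l\<in>UNIV. S$l$j * (\<Sum>k\<in>UNIV. S$k$i * Q (axis l 1) (axis k 1)))"
  proof -
    have "\<And>l. Q (axis l 1) (column i S) = (\<Sum>k\<in>UNIV. (column i S)$k * Q (axis l 1) (axis k 1))"
      by (rule lin_expand[OF l1])
    then show ?thesis by (simp add: column_def)
  qed
  moreover have "(transpose S ** (\<chi> i j. Q (axis j 1) (axis i 1)) ** S) $ i $ j =
     (\<Sum>l\<in>UNIV. (\<Sum>k\<in>UNIV. S$k$i * Q (axis l 1) (axis k 1)) * S$l$j)"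
    by (simp add: matrix_matrix_mult_def transpose_def)
  ultimately show ?thesis
    by (simp add: sum_distrib_left sum_distrib_right mult.commute mult.left_commute)
qed

lemma qf_bilin:
  fixes Q :: "real^'n \<Rightarrow> real^'n \<Rightarrow> real"
  assumes l1: "\<And>w. linear (\<lambda>v. Q w v)" and l2: "\<And>v. linear (\<lambda>w. Q w v)"
  shows "w \<bullet> ((\<chi> i j. Q (axis j 1) (axis i 1)) *v w) = Q w w"
proof -
  have "Q w w = (\<Sum>l\<in>UNIV. w$l * Q (axis l 1) w)"
    using lin_expand[OF l2, of w w] by simp
  also have "\<dots> = (\<Sum>l\<in>UNIV. w$l * (\<Sum>k\<in>UNIV. w$k * Q (axis l 1) (axis k 1)))"
  proof -
    have "\<And>l. Q (axis l 1) w = (\<Sum>k\<in>UNIV. w$k * Q (axis l 1) (axis k 1))"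
      by (rule lin_expand[OF l1])
    then show ?thesis by simp
  qed
  finally have "Q w w = (\<Sum>l\<in>UNIV. \<Sum>k\<in>UNIV. w$l * w$k * Q (axis l 1) (axis k 1))"
    by (simp add: sum_distrib_left ac_simps)
  moreover have "w \<bullet> ((\<chi> i j. Q (axis j 1) (axis i 1)) *v w) =
      (\<Sum>i\<in>UNIV. \<Sum>j\<in>UNIV. w$j * w$i * Q (axis j 1) (axis i 1))"
    by (simp add: matrix_vector_mult_def inner_vec_def sum_distrib_left mult_ac)
  moreover have "(\<Sum>i\<in>UNIV. \<Sum>j\<in>UNIV. w$j * w$i * Q (axis j 1) (axis i 1)) =
      (\<Sum>j\<in>UNIV. \<Sum>i\<in>UNIV. w$j * w$i * Q (axis j 1) (axis i 1))"
    by (rule sum.swap)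
  ultimately show ?thesis by simp
qed

lemma qf_sandwich:
  fixes S :: "real^'m^'n" and A :: "real^'n^'n"
  shows "v \<bullet> ((transpose S ** A ** S) *v v) = (S *v v) \<bullet> (A *v (S *v v))"
proof -
  have "(transpose S ** A ** S) *v v = transpose S *v (A *v (S *v v))"
    by (simp add: matrix_vector_mul_assoc matrix_mul_assoc)
  then show ?thesis by (metis dot_lmul_matrix inner_commute transpose_matrix_vector)
qed

lemma trace_proj:
  fixes M :: "real^'n^'n"
  shows "trace ((mat 1 - outer u) ** M) = trace M - u \<bullet> (M *v u)"
proof -
  have d: "(mat 1 - outer u) ** M = mat 1 ** M - outer u ** M"
    by (simp add: matrix_matrix_mult_def vec_eq_iff left_diff_distrib sum_subtractf)
  have 1: "trace ((mat 1 - outer u) ** M) = trace M - (\<Sum>i\<in>UNIV. \<Sum>k\<in>UNIV. u$i * u$k * M$k$i)"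
    unfolding d trace_sub matrix_mul_lid by (simp add: trace_def matrix_matrix_mult_def outer_def)
  have "(\<Sum>i\<in>UNIV. \<Sum>k\<in>UNIV. u$i * u$k * M$k$i) = (\<Sum>k\<in>UNIV. \<Sum>i\<in>UNIV. u$i * u$k * M$k$i)"
    by (rule sum.swap)
  also have "\<dots> = u \<bullet> (M *v u)"
    by (simp add: inner_vec_def matrix_vector_mult_def sum_distrib_left mult_ac)
  finally show ?thesis using 1 by simp
qed

lemma trace_outer:
  fixes M :: "real^'n^'n"
  shows "trace (M ** outer q) = q \<bullet> (M *v q)"
  by (simp add: trace_def matrix_matrix_mult_def outer_def inner_vec_def matrix_vector_mult_def
      sum_distrib_left mult_ac)

lemma psd_trace:
  fixes M :: "real^'n^'n"
  assumes psd: "\<And>v. 0 \<le> v \<bullet> (M *v v)" and nu: "u \<bullet> u = 1"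
  shows "u \<bullet> (M *v u) \<le> trace M"
proof -
  define Q where "Q = u \<bullet> (M *v u)"
  define v where "v i = axis i 1 - u$i *\<^sub>R u" for i
  have col: "a \<bullet> (M *v axis i 1) = (\<Sum>k\<in>UNIV. a$k * M$k$i)" for a i
    by (simp add: matrix_vector_mult_basis inner_vec_def column_def)
  have ax: "axis i 1 \<bullet> y = y$i" for i and y :: "real^'n"
    by (simp add: inner_axis')
  have gen: "(a - c *\<^sub>R u) \<bullet> (M *v (a - c *\<^sub>R u)) = a \<bullet> (M *v a) - c * (a \<bullet> (M *v u))
      - c * (u \<bullet> (M *v a)) + c^2 * (u \<bullet> (M *v u))" for a c
    by (simp add: inner_diff_left inner_diff_right matrix_vector_mult_diff_distrib
        matrix_vector_mult_scaleR power2_eq_square algebra_simps)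
  have mii: "axis i 1 \<bullet> (M *v axis i 1) = M$i$i" for i by (simp add: ax matrix_vector_mult_basis column_def)
  have e: "v i \<bullet> (M *v v i) = M$i$i - u$i * (M *v u)$i - u$i * (\<Sum>k\<in>UNIV. u$k * M$k$i) + (u$i)^2 * Q" for i
    by (simp only: v_def gen mii) (simp add: ax col Q_def)
  have s1: "(\<Sum>i\<in>UNIV. u$i * (M *v u)$i) = Q" by (simp add: Q_def inner_vec_def)
  have "(\<Sum>i\<in>UNIV. u$i * (\<Sum>k\<in>UNIV. u$k * M$k$i)) = (\<Sum>i\<in>UNIV. \<Sum>k\<in>UNIV. u$i * u$k * M$k$i)"
    by (simp add: sum_distrib_left mult_ac)
  also have "\<dots> = (\<Sum>k\<in>UNIV. \<Sum>i\<in>UNIV. u$i * u$k * M$k$i)" by (rule sum.swap)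
  also have "\<dots> = Q" by (simp add: Q_def inner_vec_def matrix_vector_mult_def sum_distrib_left mult_ac)
  finally have s2: "(\<Sum>i\<in>UNIV. u$i * (\<Sum>k\<in>UNIV. u$k * M$k$i)) = Q" .
  have s3: "(\<Sum>i\<in>UNIV. (u$i)^2 * Q) = Q"
    using nu by (simp add: inner_vec_def power2_eq_square sum_distrib_right[symmetric])
  have "0 \<le> (\<Sum>i\<in>UNIV. v i \<bullet> (M *v v i))" by (intro sum_nonneg psd)
  also have "\<dots> = trace M - Q - Q + Q"
    unfolding e using s1 s2 s3 by (simp add: sum.distrib sum_subtractf trace_def)
  finally show ?thesis by (simp add: Q_def)
qed



lemma hpart_add: "hpart (x + y) = hpart x + hpart y" by (simp add: hpart_def vec_eq_iff)
lemma hpart_scaleR: "hpart (c *\<^sub>R x) = c *\<^sub>R hpart x" by (simp add: hpart_def vec_eq_iff)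
lemma vpart_add: "vpart (x + y) = vpart x + vpart y" by (simp add: vpart_def)
lemma vpart_scaleR: "vpart (c *\<^sub>R x) = c * vpart x" by (simp add: vpart_def)
lemma lin_hpart: "linear hpart" by (simp add: linear_iff hpart_add hpart_scaleR)
lemma lin_vpart: "linear vpart" by (simp add: linear_iff vpart_add vpart_scaleR)
lemma bl_hpart: "bounded_linear hpart" using lin_hpart linear_conv_bounded_linear by blast
lemma bl_vpart: "bounded_linear vpart" using lin_vpart linear_conv_bounded_linear by blast

lemma hpart_der [derivative_intros]:
  "(f has_derivative f') F \<Longrightarrow> ((\<lambda>x. hpart (f x)) has_derivative (\<lambda>x. hpart (f' x))) F"
  by (rule bounded_linear.has_derivative[OF bl_hpart])
lemma vpart_der [derivative_intros]:
  "(f has_derivative f') F \<Longrightarrow> ((\<lambda>x. vpart (f x)) has_derivative (\<lambda>x. vpart (f' x))) F"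
  by (rule bounded_linear.has_derivative[OF bl_vpart])

lemma hpart_col: "hpart (column j (sigma B x)) = axis j 1"
  by (simp add: hpart_def column_def sigma_def axis_def vec_eq_iff)
lemma vpart_col: "vpart (column j (sigma B x)) = (B *v hpart x) $ j"
  by (simp add: vpart_def column_def sigma_def)

lemma neg_mv: "(- A) *v (x::real^'n) = - (A *v x)"
  by (simp add: matrix_vector_mult_def vec_eq_iff sum_negf)

lemma B_orth:
  fixes B :: "real^'m^'m"
  assumes "transpose B = - B" "invertible B" "matrix_inv B = - B"
  shows "a \<bullet> (B *v a) = 0" "(B *v a) \<bullet> (B *v a) = a \<bullet> a"
proof -
  have t: "a \<bullet> (B *v y) = - ((B *v a) \<bullet> y)" for y
  proof -
    have "a \<bullet> (B *v y) = (a v* B) \<bullet> y" by (simp add: dot_lmul_matrix)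
    also have "a v* B = transpose B *v a" by simp
    also have "\<dots> = - (B *v a)" using assms(1) by (simp add: neg_mv)
    finally show ?thesis by simp
  qed
  from t[of a] show "a \<bullet> (B *v a) = 0" by (simp add: inner_commute)
  have inv: "matrix_inv B ** B = mat 1"
    using assms(2) unfolding invertible_def matrix_inv_def by (metis (mono_tags, lifting) someI_ex)
  have 1: "(B *v a) \<bullet> (B *v a) = - (a \<bullet> (B *v (B *v a)))" using t[of "B *v a"] by simp
  have 2: "- (B *v (B *v a)) = (matrix_inv B ** B) *v a"
    using assms(3) by (simp add: matrix_vector_mul_assoc[symmetric] neg_mv)
  have 3: "(matrix_inv B ** B) *v a = a" using inv by simp
  show "(B *v a) \<bullet> (B *v a) = a \<bullet> a"
    using 1 2 3 by (metis inner_minus_right)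
qed

definition uf :: "real \<Rightarrow> real \<Rightarrow> real^('m::finite option) \<Rightarrow> real \<Rightarrow> real" where
  "uf c r = (\<lambda>x t. c * t - ((norm (hpart x)) ^ 4 + 4 * (vpart x) ^ 2) + r)"

definition U1 :: "real^('m::finite option) \<Rightarrow> real^('m option) \<Rightarrow> real" where
  "U1 y h = - (4 * (hpart y \<bullet> hpart y) * (hpart y \<bullet> hpart h) + 8 * vpart y * vpart h)"

definition U2 :: "real^('m::finite option) \<Rightarrow> real^('m option) \<Rightarrow> real^('m option) \<Rightarrow> real" where
  "U2 x w h = - (8 * (hpart x \<bullet> hpart w) * (hpart x \<bullet> hpart h)
     + 4 * (hpart x \<bullet> hpart x) * (hpart w \<bullet> hpart h) + 8 * vpart w * vpart h)"

lemma uf_eq: "uf c r y t = c * t - ((hpart y \<bullet> hpart y)^2 + 4 * (vpart y)^2) + r"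
proof -
  have "(norm (hpart y))^4 = ((norm (hpart y))^2)^2" by simp
  then show ?thesis by (simp add: uf_def power2_norm_eq_inner)
qed

lemma uf_der1: "((\<lambda>y. uf c r y t) has_derivative U1 y) (at y)"
  unfolding uf_eq
  by (auto intro!: derivative_eq_intros simp: U1_def fun_eq_iff inner_commute algebra_simps power2_eq_square)

lemma uf_der2: "((\<lambda>y. U1 y h) has_derivative (\<lambda>w. U2 y w h)) (at y)"
  unfolding U1_def
  by (auto intro!: derivative_eq_intros simp: U2_def fun_eq_iff inner_commute algebra_simps)

lemma U1_lin: "linear (U1 y)"
  by (simp add: linear_iff U1_def hpart_add hpart_scaleR vpart_add vpart_scaleR inner_add_right algebra_simps)
lemma U2_lin1: "linear (\<lambda>h. U2 x w h)"
  by (simp add: linear_iff U2_def hpart_add hpart_scaleR vpart_add vpart_scaleR inner_add_right algebra_simps)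
lemma U2_lin2: "linear (\<lambda>w. U2 x w h)"
  by (simp add: linear_iff U2_def hpart_add hpart_scaleR vpart_add vpart_scaleR inner_add_left algebra_simps)

lemma grad_uf: "grad (uf c r) x t = (\<chi> i. U1 x (axis i 1))"
proof -
  have "deriv (\<lambda>s. uf c r (x + s *\<^sub>R axis i 1) t) 0 = U1 x (axis i 1)" for i
    by (rule deriv_dir[OF uf_der1])
  then show ?thesis unfolding grad_def by simp
qed

lemma hess_uf: "hess (uf c r) x t = (\<chi> i j. U2 x (axis j 1) (axis i 1))"
proof -
  have g: "(\<lambda>y. grad (uf c r) y t $ i) = (\<lambda>y. U1 y (axis i 1))" for i by (simp add: grad_uf)
  have "deriv (\<lambda>s. U1 (x + s *\<^sub>R axis j 1) (axis i 1)) 0 = U2 x (axis j 1) (axis i 1)" for i j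
    by (rule deriv_dir[OF uf_der2])
  then show ?thesis unfolding hess_def grad_uf by simp
qed

lemma dtime_uf: "dtime (uf c r) x t = c"
proof -
  have "((\<lambda>s. uf c r x s) has_real_derivative c) (at t)"
    unfolding uf_def by (auto intro!: derivative_eq_intros)
  then show ?thesis unfolding dtime_def by (rule DERIV_imp_deriv)
qed

lemma axis_nth2: "axis j (1::real) $ i = (if i = j then 1 else 0)" by (simp add: axis_def)
lemma trace_neg: "trace (- (M::real^'n^'n)) = - trace M" by (simp add: trace_def sum_negf)
lemma trace_scaleR: "trace (c *\<^sub>R (M::real^'n^'n)) = c * trace M"
  by (simp add: trace_def sum_distrib_left)
lemma trace_outer_self: "trace (outer (a::real^'n)) = a \<bullet> a"
  by (simp add: trace_def outer_def inner_vec_def)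
lemma outer_mv: "outer (a::real^'n) *v q = (a \<bullet> q) *\<^sub>R a"
  by (simp add: vec_eq_iff matrix_vector_mult_def outer_def inner_vec_def sum_distrib_left mult_ac)
lemma scaleR_mv: "(c *\<^sub>R (M::real^'n^'m)) *v q = c *\<^sub>R (M *v q)"
  by (simp add: vec_eq_iff matrix_vector_mult_def sum_distrib_left mult_ac)

lemma Xh_uf:
  "Xh B (uf c r) x t = - ((4 * (hpart x \<bullet> hpart x)) *\<^sub>R hpart x + (8 * vpart x) *\<^sub>R (B *v hpart x))"
proof -
  have "Xh B (uf c r) x t $ j = U1 x (column j (sigma B x))" for j
    unfolding Xh_def grad_uf by (rule vm_lin[OF U1_lin])
  then show ?thesis
    by (simp add: vec_eq_iff U1_def hpart_col vpart_col inner_axis)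
qed

lemma X2h_uf:
  "X2h B (uf c r) x t = - (8 *\<^sub>R outer (hpart x) + (4 * (hpart x \<bullet> hpart x)) *\<^sub>R mat 1
      + 8 *\<^sub>R outer (B *v hpart x))"
proof -
  have "X2h B (uf c r) x t $ i $ j = U2 x (column j (sigma B x)) (column i (sigma B x))" for i j
    unfolding X2h_def hess_uf by (rule mm_bilin[OF U2_lin1 U2_lin2])
  then show ?thesis
    by (simp add: vec_eq_iff U2_def hpart_col vpart_col inner_axis inner_axis_axis outer_def mat_def
        axis_nth2 algebra_simps)
qed

lemma key_uf:
  fixes B :: "real^'m::finite^'m" and c r t :: real and x :: "real^('m option)"
  assumes B: "transpose B = - B" "invertible B" "matrix_inv B = - B"
    and a0: "hpart x \<noteq> 0"
  defines "q \<equiv> Xh B (uf c r) x t" and "M \<equiv> X2h B (uf c r) x t"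
  shows "q \<bullet> q > 0"
    and "trace M - (q \<bullet> (M *v q)) / (q \<bullet> q) = - (4 * real (CARD('m) + 1) * (norm (hpart x))\<^sup>2)"
proof -
  define a where "a = hpart x"
  define b where "b = B *v a"
  define A2 where "A2 = a \<bullet> a"
  define xv where "xv = vpart x"
  have ab: "a \<bullet> b = 0" "b \<bullet> a = 0" and bb: "b \<bullet> b = A2"
    using B_orth[OF B, of a] by (auto simp: b_def A2_def inner_commute)
  have A20: "A2 > 0" using a0 by (simp add: A2_def a_def)
  have q: "q = - ((4 * A2) *\<^sub>R a + (8 * xv) *\<^sub>R b)"
    by (simp add: q_def Xh_uf a_def b_def A2_def xv_def)
  have M: "M = - (8 *\<^sub>R outer a + (4 * A2) *\<^sub>R mat 1 + 8 *\<^sub>R outer b)"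
    by (simp add: M_def X2h_uf a_def b_def A2_def)
  have aq: "a \<bullet> q = - (4 * A2 * A2)" using ab by (simp add: q inner_add_right inner_diff_right inner_diff_left A2_def)
  have bq: "b \<bullet> q = - (8 * xv * A2)" using ab bb by (simp add: q inner_add_right inner_diff_right inner_diff_left)
  have qq: "q \<bullet> q = 16 * A2^3 + 64 * xv^2 * A2"
    using ab bb by (simp add: q inner_add_right inner_diff_right inner_diff_left inner_add_left A2_def power2_eq_square power3_eq_cube algebra_simps)
  show qpos: "q \<bullet> q > 0" unfolding qq using A20 by (simp add: add_pos_nonneg)
  have tr: "trace M = - (8 * A2 + 4 * A2 * real CARD('m) + 8 * A2)"
    unfolding M by (simp add: trace_add trace_sub trace_neg trace_scaleR trace_outer_self trace_I A2_def
        bb[unfolded A2_def] algebra_simps)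
  have Mq: "M *v q = - ((8 * (a \<bullet> q)) *\<^sub>R a + (4 * A2) *\<^sub>R q + (8 * (b \<bullet> q)) *\<^sub>R b)"
    unfolding M by (simp add: neg_mv matrix_vector_mult_add_rdistrib matrix_vector_mult_diff_rdistrib scaleR_mv outer_mv)
  have qMq: "q \<bullet> (M *v q) = - (8 * (a \<bullet> q)^2 + 4 * A2 * (q \<bullet> q) + 8 * (b \<bullet> q)^2)"
    unfolding Mq by (simp add: inner_add_right inner_diff_right inner_commute power2_eq_square)
  have "trace M - (q \<bullet> (M *v q)) / (q \<bullet> q) = - (4 * real CARD('m) + 4) * A2"
    unfolding tr qMq aq bq using qpos unfolding qq
    by (simp add: field_simps power2_eq_square power3_eq_cube)
  then show "trace M - (q \<bullet> (M *v q)) / (q \<bullet> q) = - (4 * real (CARD('m) + 1) * (norm (hpart x))\<^sup>2)"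
    by (simp add: A2_def a_def power2_norm_eq_inner algebra_simps)
qed



definition eb :: "real^'n^'m \<Rightarrow> real \<Rightarrow> bool" where
  "eb M K \<longleftrightarrow> (\<forall>i j. \<bar>M$i$j\<bar> \<le> K)"

lemma eb_mono: "eb M K \<Longrightarrow> K \<le> K' \<Longrightarrow> eb M K'"
  unfolding eb_def by (metis order.trans)

lemma eb_nonneg: "eb (M::real^'n^'m) K \<Longrightarrow> 0 \<le> K"
proof -
  assume "eb M K"
  then have "\<bar>M$undefined$undefined\<bar> \<le> K" unfolding eb_def by blast
  then show "0 \<le> K" by linarith
qed

lemma eb_mult:
  fixes P :: "real^'k^'i" and Q :: "real^'j^'k"
  assumes "eb P a" "eb Q b"
  shows "eb (P ** Q) (real CARD('k) * a * b)"
  unfolding eb_def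
proof (intro allI)
  fix i j
  have b0: "0 \<le> b" using eb_nonneg[OF assms(2)] .
  have a0: "0 \<le> a" using eb_nonneg[OF assms(1)] .
  have "\<bar>(P ** Q)$i$j\<bar> \<le> (\<Sum>k\<in>UNIV. \<bar>P$i$k * Q$k$j\<bar>)"
    unfolding matrix_matrix_mult_def by simp
  also have "\<dots> \<le> (\<Sum>k\<in>(UNIV::'k set). a * b)"
    using assms a0 b0 unfolding eb_def
    by (intro sum_mono) (auto simp: abs_mult intro!: mult_mono)
  also have "\<dots> = real CARD('k) * a * b" by simp
  finally show "\<bar>(P ** Q)$i$j\<bar> \<le> real CARD('k) * a * b" .
qed

lemma eb_transpose: "eb P a \<Longrightarrow> eb (transpose P) a"
  unfolding eb_def transpose_def by simp

lemma eb_norm: "eb M (norm M)"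
  unfolding eb_def
proof (intro allI)
  fix i j
  have "\<bar>M$i$j\<bar> \<le> norm (M$i)" by (rule component_le_norm_cart)
  also have "\<dots> \<le> norm M" by (metis Finite_Cartesian_Product.norm_nth_le)
  finally show "\<bar>M$i$j\<bar> \<le> norm M" .
qed

lemma eb_sigma:
  fixes B :: "real^'m::finite^'m"
  assumes "norm x \<le> R"
  shows "eb (sigma B x) (1 + real CARD('m) * norm B * R)"
  unfolding eb_def
proof (intro allI)
  fix k j
  have R0: "0 \<le> R" using assms norm_ge_zero[of x] by linarith
  have bnd: "\<bar>(B *v hpart x)$j\<bar> \<le> real CARD('m) * norm B * R"
  proof -
    have "\<bar>(B *v hpart x)$j\<bar> \<le> (\<Sum>i\<in>UNIV. \<bar>B$j$i * x $ Some i\<bar>)"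
      unfolding matrix_vector_mult_def hpart_def by simp
    also have "\<dots> \<le> (\<Sum>i\<in>(UNIV::'m set). norm B * R)"
    proof (intro sum_mono)
      fix i
      have "\<bar>B$j$i\<bar> \<le> norm B" using eb_norm[of B] unfolding eb_def by blast
      moreover have "\<bar>x $ Some i\<bar> \<le> R" using component_le_norm_cart[of x "Some i"] assms by linarith
      ultimately show "\<bar>B$j$i * x $ Some i\<bar> \<le> norm B * R"
        by (simp add: abs_mult mult_mono)
    qed
    also have "\<dots> = real CARD('m) * norm B * R" by simp
    finally show ?thesis .
  qed
  have "0 \<le> real CARD('m) * norm B * R" using R0 by simp
  then show "\<bar>sigma B x $ k $ j\<bar> \<le> 1 + real CARD('m) * norm B * R"
    using bnd by (cases k) (auto simp: sigma_def)
qed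

lemma Fmc_bound:
  fixes M :: "real^'m::finite^'m"
  assumes "eb M K"
  shows "\<bar>Fmc q M\<bar> \<le> real CARD('m) * (real CARD('m) * 2 * K)"
proof -
  define u where "u = q /\<^sub>R norm q"
  have nu: "norm u \<le> 1" unfolding u_def sgn_div_norm[symmetric] norm_sgn by simp
  have ui: "\<bar>u$i\<bar> \<le> 1" for i using component_le_norm_cart[of u i] nu by linarith
  have "eb (mat 1 - outer u) 2"
    unfolding eb_def
  proof (intro allI)
    fix i j
    have "\<bar>u$i * u$j\<bar> \<le> 1" using ui[of i] ui[of j] by (simp add: abs_mult mult_le_one)
    moreover have "\<bar>(mat 1 - outer u)$i$j\<bar> \<le> \<bar>(mat 1::real^'m^'m)$i$j\<bar> + \<bar>u$i * u$j\<bar>"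
      by (simp add: outer_def abs_triangle_ineq4)
    moreover have "\<bar>(mat 1::real^'m^'m)$i$j\<bar> \<le> 1" by (simp add: mat_def)
    ultimately show "\<bar>(mat 1 - outer u)$i$j\<bar> \<le> 2" by linarith
  qed
  from eb_mult[OF this assms]
  have e: "eb ((mat 1 - outer u) ** M) (real CARD('m) * 2 * K)" .
  have "\<bar>Fmc q M\<bar> = \<bar>\<Sum>i\<in>UNIV. ((mat 1 - outer u) ** M)$i$i\<bar>"
    by (simp add: Fmc_def u_def trace_def)
  also have "\<dots> \<le> (\<Sum>i\<in>UNIV. \<bar>((mat 1 - outer u) ** M)$i$i\<bar>)" by (rule sum_abs)
  also have "\<dots> \<le> (\<Sum>i\<in>(UNIV::'m set). real CARD('m) * 2 * K)"
    using e unfolding eb_def by (intro sum_mono) blast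
  also have "\<dots> = real CARD('m) * (real CARD('m) * 2 * K)" by simp
  finally show ?thesis .
qed

lemma Gop_bounded:
  fixes B :: "real^'m::finite^'m" and z :: "'m jet"
  shows "\<exists>K. \<forall>w. dist w z < e \<longrightarrow> \<bar>Gop B w\<bar> \<le> K"
proof -
  obtain x t p A where z: "z = (x, t, p, A)" by (cases z) auto
  define R1 where "R1 = norm x + e"
  define R2 where "R2 = norm A + e"
  define Sg where "Sg = 1 + real CARD('m) * norm B * R1"
  define n where "n = real CARD('m option)"
  define K where "K = real CARD('m) * (real CARD('m) * 2 * (n * (n * Sg * R2) * Sg))"
  show ?thesis
  proof (intro exI[of _ K] allI impI)
    fix w assume dw: "dist w z < e"
    obtain x' t' p' A' where w: "w = (x', t', p', A')" by (cases w) auto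
    have d1: "dist x' x < e" using dw dist_fst_le[of w z] unfolding w z by simp
    have d2: "dist A' A < e"
    proof -
      have "dist (snd (snd (snd w))) (snd (snd (snd z))) \<le> dist w z"
        using dist_snd_le[of w z] dist_snd_le[of "snd w" "snd z"]
          dist_snd_le[of "snd (snd w)" "snd (snd z)"] by linarith
      then show ?thesis using dw unfolding w z by simp
    qed
    have n1: "norm x' \<le> R1" using d1 norm_triangle_ineq2[of x' x] unfolding R1_def dist_norm by linarith
    have n2: "norm A' \<le> R2" using d2 norm_triangle_ineq2[of A' A] unfolding R2_def dist_norm by linarith
    have es: "eb (sigma B x') Sg" unfolding Sg_def by (rule eb_sigma[OF n1])
    have eA: "eb A' R2" using eb_mono[OF eb_norm n2] .
    have "eb (transpose (sigma B x') ** A' ** sigma B x') (n * (n * Sg * R2) * Sg)"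
    proof -
      have e1: "eb (transpose (sigma B x') ** A') (n * Sg * R2)"
        unfolding n_def by (rule eb_mult[OF eb_transpose[OF es] eA])
      show ?thesis unfolding n_def by (rule eb_mult[OF e1[unfolded n_def] es])
    qed
    note fb = Fmc_bound[OF this, of "p' v* sigma B x'"]
    have "Gop B w = Fmc (p' v* sigma B x') (transpose (sigma B x') ** A' ** sigma B x')"
      unfolding w Gop_def by simp
    then show "\<bar>Gop B w\<bar> \<le> K" using fb unfolding K_def by (simp only:)
  qed
qed

lemma G_upper_ge:
  fixes B :: "real^'m::finite^'m" and z :: "'m jet"
  assumes "\<And>e. e > 0 \<Longrightarrow> \<exists>w\<in>Gdom B. dist w z < e \<and> L \<le> Gop B w"
  shows "L \<le> G_upper B z"
  unfolding G_upper_def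
proof (rule cINF_greatest)
  show "{0::real<..} \<noteq> {}" by auto
  fix e :: real assume "e \<in> {0<..}"
  then have e: "e > 0" by simp
  obtain w where w: "w \<in> Gdom B" "dist w z < e" "L \<le> Gop B w" using assms[OF e] by blast
  obtain K where K: "\<forall>w. dist w z < e \<longrightarrow> \<bar>Gop B w\<bar> \<le> K" using Gop_bounded by blast
  have bdd: "bdd_above (Gop B ` {w \<in> Gdom B. dist w z < e})"
    by (rule bdd_aboveI2[where M=K]) (use K in \<open>auto simp: abs_le_iff\<close>)
  show "L \<le> (SUP w\<in>{w \<in> Gdom B. dist w z < e}. Gop B w)"
    by (rule cSUP_upper2[OF bdd, of w]) (use w in auto)
qed

lemma G_lower_le:
  fixes B :: "real^'m::finite^'m" and z :: "'m jet"
  assumes "\<And>e. e > 0 \<Longrightarrow> \<exists>w\<in>Gdom B. dist w z < e \<and> Gop B w \<le> L"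
  shows "G_lower B z \<le> L"
  unfolding G_lower_def
proof (rule cSUP_least)
  show "{0::real<..} \<noteq> {}" by auto
  fix e :: real assume "e \<in> {0<..}"
  then have e: "e > 0" by simp
  obtain w where w: "w \<in> Gdom B" "dist w z < e" "Gop B w \<le> L" using assms[OF e] by blast
  obtain K where K: "\<forall>w. dist w z < e \<longrightarrow> \<bar>Gop B w\<bar> \<le> K" using Gop_bounded by blast
  have bdd: "bdd_below (Gop B ` {w \<in> Gdom B. dist w z < e})"
    by (rule bdd_belowI2[where m="-K"]) (use K in \<open>auto simp: abs_le_iff minus_le_iff\<close>)
  show "(INF w\<in>{w \<in> Gdom B. dist w z < e}. Gop B w) \<le> L"
    by (rule cINF_lower2[OF bdd, of w]) (use w in auto)
qed



lemma unit_q: "(q::real^'n) \<noteq> 0 \<Longrightarrow> (q /\<^sub>R norm q) \<bullet> (q /\<^sub>R norm q) = 1"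
  by (simp add: power2_norm_eq_inner[symmetric] power2_eq_square)

lemma Fmc_eq: "Fmc q M = - (trace M - (q /\<^sub>R norm q) \<bullet> (M *v (q /\<^sub>R norm q)))"
  unfolding Fmc_def trace_proj by simp

lemma Fmc_nsd:
  assumes "\<And>v. v \<bullet> (M *v v) \<le> 0" "q \<noteq> 0"
  shows "0 \<le> Fmc q M"
proof -
  define u where "u = q /\<^sub>R norm q"
  have uu: "u \<bullet> u = 1" unfolding u_def using assms(2) by (rule unit_q)
  have "u \<bullet> ((- M) *v u) \<le> trace (- M)"
    by (rule psd_trace) (use assms uu in \<open>auto simp: neg_mv\<close>)
  then show ?thesis unfolding Fmc_eq u_def[symmetric] by (simp add: neg_mv trace_neg)
qed

lemma Fmc_psd:
  assumes "\<And>v. 0 \<le> v \<bullet> (M *v v)" "q \<noteq> 0"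
  shows "Fmc q M \<le> 0"
proof -
  define u where "u = q /\<^sub>R norm q"
  have uu: "u \<bullet> u = 1" unfolding u_def using assms(2) by (rule unit_q)
  have "u \<bullet> (M *v u) \<le> trace M"
    by (rule psd_trace) (use assms uu in auto)
  then show ?thesis unfolding Fmc_eq u_def[symmetric] by simp
qed

lemma Fmc_mono:
  assumes "\<And>v. 0 \<le> v \<bullet> ((M - N) *v v)" "q \<noteq> 0"
  shows "Fmc q M \<le> Fmc q N"
proof -
  define u where "u = q /\<^sub>R norm q"
  have uu: "u \<bullet> u = 1" unfolding u_def using assms(2) by (rule unit_q)
  have "u \<bullet> ((M - N) *v u) \<le> trace (M - N)"
    by (rule psd_trace) (use assms uu in auto)
  then show ?thesis unfolding Fmc_eq u_def[symmetric]
    by (simp add: trace_sub matrix_vector_mult_diff_rdistrib inner_diff_right)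
qed

lemma vm_add: "(a + b) v* (M::real^'n^'m) = a v* M + b v* M"
  by (simp add: vec_eq_iff vector_matrix_mult_def sum.distrib distrib_right)
lemma vm_scaleR: "(c *\<^sub>R a) v* (M::real^'n^'m) = c *\<^sub>R (a v* M)"
  by (simp add: vec_eq_iff vector_matrix_mult_def sum_distrib_left mult_ac)
lemma axis_vm: "axis i (1::real) v* M = M $ i"
proof -
  have "(axis i (1::real) v* M) $ j = axis i 1 \<bullet> column j M" for j
    by (simp add: vector_matrix_mult_def inner_vec_def column_def mult.commute)
  then show ?thesis by (simp add: vec_eq_iff inner_axis' column_def)
qed

lemma sigma_row: "sigma B x $ Some k = axis k 1"
  by (simp add: sigma_def vec_eq_iff axis_def)

lemma witness:
  fixes B :: "real^'m::finite^'m" and p :: "real^('m option)"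
  assumes e: "e > 0"
  shows "\<exists>p'. dist p' p < e \<and> p' v* sigma B x \<noteq> 0 \<and> (p v* sigma B x \<noteq> 0 \<longrightarrow> p' = p)"
proof (cases "p v* sigma B x = 0")
  case False then show ?thesis using e by (intro exI[of _ p]) auto
next
  case True
  define p' where "p' = p + (e/2) *\<^sub>R axis (Some undefined) 1"
  have "p' v* sigma B x = (e/2) *\<^sub>R axis undefined 1"
    unfolding p'_def vm_add vm_scaleR axis_vm sigma_row True by simp
  then have "p' v* sigma B x \<noteq> 0" using e by (simp add: axis_eq_0_iff)
  moreover have "dist p' p < e" using e by (simp add: p'_def dist_norm)
  ultimately show ?thesis using True by blast
qed

lemma dist_jet: "dist ((x, t, p', A)::'m::finite jet) (x, t, p, A) = dist p' p"
  by (simp add: dist_Pair_Pair)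

lemma Gop_at: "Gop B (x, t, p, A) = Fmc (p v* sigma B x) (transpose (sigma B x) ** A ** sigma B x)"
  by (simp add: Gop_def)



lemma lin_pair0: "linear (\<lambda>v. blinfun_apply G (v, 0::real))"
  unfolding linear_iff
proof (intro conjI allI)
  fix v1 v2
  show "blinfun_apply G (v1 + v2, 0) = blinfun_apply G (v1, 0) + blinfun_apply G (v2, 0)"
    using blinfun.add_right[of G "(v1, 0)" "(v2, 0)"] by simp
next
  fix c v
  show "blinfun_apply G (c *\<^sub>R v, 0) = c *\<^sub>R blinfun_apply G (v, 0)"
    using blinfun.scaleR_right[of G c "(v, 0)"] by simp
qed

lemma phi_data:
  fixes \<phi> :: "real^'n::finite \<Rightarrow> real \<Rightarrow> real"
  assumes S: "open S" "(x, t) \<in> S" and C2: "C2_on S \<phi>"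
  obtains F1 F2 Dt where
    "\<forall>y\<in>{y. (y, t) \<in> S}. ((\<lambda>y. \<phi> y t) has_derivative F1 y) (at y)"
    "\<And>v. ((\<lambda>y. F1 y v) has_derivative (\<lambda>w. F2 w v)) (at x)"
    "\<And>w. linear (\<lambda>v. F2 w v)" "\<And>v. linear (\<lambda>w. F2 w v)"
    "grad \<phi> x t = (\<chi> i. F1 x (axis i 1))"
    "hess \<phi> x t = (\<chi> i j. F2 (axis j 1) (axis i 1))"
    "transpose (hess \<phi> x t) = hess \<phi> x t"
    "((\<lambda>s. \<phi> x s) has_real_derivative Dt) (at t)" "dtime \<phi> x t = Dt"
proof -
  obtain D D2 where D: "\<forall>z\<in>S. ((\<lambda>(y, s). \<phi> y s) has_derivative blinfun_apply (D z)) (at z)"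
    and D2: "\<forall>z\<in>S. (D has_derivative blinfun_apply (D2 z)) (at z)"
    using C2 unfolding C2_on_def by blast
  define U where "U = {y. (y, t) \<in> S}"
  have Ueq: "U = (\<lambda>y. (y, t)) -` S" by (auto simp: U_def)
  have openU: "open U" unfolding Ueq
    by (rule continuous_open_vimage[OF S(1)]) (intro continuous_intros)
  have xU: "x \<in> U" using S by (simp add: U_def)
  have dpair: "((\<lambda>y. (y, t)) has_derivative (\<lambda>h. (h, 0))) (at y)" for y :: "real^'n"
    by (auto intro!: derivative_eq_intros)
  define F1 where "F1 y h = blinfun_apply (D (y, t)) (h, 0)" for y h
  define F2 where "F2 w v = blinfun_apply (blinfun_apply (D2 (x, t)) (w, 0)) (v, 0)" for w v
  have d1: "\<forall>y\<in>U. ((\<lambda>y. \<phi> y t) has_derivative F1 y) (at y)"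
  proof
    fix y assume "y \<in> U"
    then have "((\<lambda>(y, s). \<phi> y s) has_derivative blinfun_apply (D (y, t))) (at (y, t))"
      using D by (auto simp: U_def)
    from has_derivative_compose[OF dpair this]
    show "((\<lambda>y. \<phi> y t) has_derivative F1 y) (at y)" by (simp add: F1_def[abs_def])
  qed
  have d2: "((\<lambda>y. F1 y v) has_derivative (\<lambda>w. F2 w v)) (at x)" for v
  proof -
    have "(D has_derivative blinfun_apply (D2 (x, t))) (at (x, t))" using D2 S by blast
    from has_derivative_compose[OF dpair this]
    have "((\<lambda>y. D (y, t)) has_derivative (\<lambda>w. blinfun_apply (D2 (x, t)) (w, 0))) (at x)" by simp
    from bounded_linear.has_derivative[OF blinfun.bounded_linear_left this]
    show ?thesis by (simp add: F1_def F2_def)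
  qed
  have l1: "linear (\<lambda>v. F2 w v)" for w unfolding F2_def by (rule lin_pair0)
  have l2: "linear (\<lambda>w. F2 w v)" for v
  proof -
    have "linear ((\<lambda>a. blinfun_apply a (v, 0)) \<circ> (\<lambda>w. blinfun_apply (D2 (x, t)) (w, 0)))"
      by (intro linear_compose lin_pair0 bounded_linear.linear[OF blinfun.bounded_linear_left])
    then show ?thesis by (simp add: F2_def o_def)
  qed
  have gy: "grad \<phi> y t = (\<chi> i. F1 y (axis i 1))" if "y \<in> U" for y
  proof -
    have "deriv (\<lambda>s. \<phi> (y + s *\<^sub>R axis i 1) t) 0 = F1 y (axis i 1)" for i
      using deriv_dir[of "\<lambda>y. \<phi> y t"] d1 that by blast
    then show ?thesis unfolding grad_def by simp
  qed
  have hx: "hess \<phi> x t = (\<chi> i j. F2 (axis j 1) (axis i 1))"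
  proof -
    have "deriv (\<lambda>s. grad \<phi> (x + s *\<^sub>R axis j 1) t $ i) 0 = F2 (axis j 1) (axis i 1)" for i j
      by (rule deriv_dir_tr[OF openU xU _ d2]) (simp add: gy)
    then show ?thesis unfolding hess_def by simp
  qed
  have sym: "transpose (hess \<phi> x t) = hess \<phi> x t"
  proof -
    have "F2 (axis j 1) (axis i 1) = F2 (axis i 1) (axis j 1)" for i j
      by (rule Schwarz[OF openU xU d1 d2 d2])
    then show ?thesis unfolding hx by (simp add: transpose_def vec_eq_iff)
  qed
  define Dt where "Dt = blinfun_apply (D (x, t)) (0, 1)"
  have dt: "((\<lambda>s. \<phi> x s) has_real_derivative Dt) (at t)"
  proof -
    have dp: "((\<lambda>s. (x, s)) has_derivative (\<lambda>h. (0, h))) (at t)"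
      by (auto intro!: derivative_eq_intros)
    have "((\<lambda>(y, s). \<phi> y s) has_derivative blinfun_apply (D (x, t))) (at (x, t))" using D S by blast
    from has_derivative_compose[OF dp this]
    have "((\<lambda>s. \<phi> x s) has_derivative (\<lambda>h. blinfun_apply (D (x, t)) (0, h))) (at t)" by simp
    moreover have "(\<lambda>h. blinfun_apply (D (x, t)) (0, h)) = (*) Dt"
    proof
      fix h :: real
      show "blinfun_apply (D (x, t)) (0, h) = Dt * h"
        using blinfun.scaleR_right[of "D (x, t)" h "(0, 1)"] by (simp add: Dt_def mult.commute)
    qed
    ultimately show ?thesis by (simp add: has_field_derivative_def)
  qed
  have "dtime \<phi> x t = Dt" unfolding dtime_def using dt by (rule DERIV_imp_deriv)
  show ?thesis
    by (rule that[of F1 F2 Dt]) (use d1 d2 l1 l2 gy xU hx sym dt \<open>dtime \<phi> x t = Dt\<close> in \<open>auto simp: U_def\<close>)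
qed



lemma hpart_cont [continuous_intros]: "continuous F f \<Longrightarrow> continuous F (\<lambda>x. hpart (f x))"
  by (rule bounded_linear.continuous[OF bl_hpart])
lemma vpart_cont [continuous_intros]: "continuous F f \<Longrightarrow> continuous F (\<lambda>x. vpart (f x))"
  by (rule bounded_linear.continuous[OF bl_vpart])

lemma uf_cont: "continuous (at z within S) (\<lambda>(y, s). uf c r y s)"
proof -
  have eq: "(\<lambda>(y, s). uf c r y s) = (\<lambda>z. c * snd z - ((hpart (fst z) \<bullet> hpart (fst z))^2 + 4 * (vpart (fst z))^2) + r)"
    by (auto simp: uf_eq fun_eq_iff)
  show ?thesis unfolding eq by (intro continuous_intros)
qed

lemma usc_uf: "usc_on S (uf c r)"
  unfolding usc_on_def
proof (intro ballI allI impI)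
  fix z a assume "z \<in> S" "(\<lambda>(y, s). uf c r y s) z < a"
  moreover have "((\<lambda>(y, s). uf c r y s) \<longlongrightarrow> (\<lambda>(y, s). uf c r y s) z) (at z within S)"
    using uf_cont continuous_within by blast
  ultimately show "\<forall>\<^sub>F w in at z within S. (\<lambda>(y, s). uf c r y s) w < a"
    using order_tendstoD(2) by blast
qed

lemma lsc_uf: "lsc_on S (uf c r)"
  unfolding lsc_on_def
proof (intro ballI allI impI)
  fix z a assume "z \<in> S" "a < (\<lambda>(y, s). uf c r y s) z"
  moreover have "((\<lambda>(y, s). uf c r y s) \<longlongrightarrow> (\<lambda>(y, s). uf c r y s) z) (at z within S)"
    using uf_cont continuous_within by blast
  ultimately show "\<forall>\<^sub>F w in at z within S. a < (\<lambda>(y, s). uf c r y s) w"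
    using order_tendstoD(1) by blast
qed

lemma duf_t: "((\<lambda>s. uf c r x s) has_real_derivative c) (at t)"
  unfolding uf_def by (auto intro!: derivative_eq_intros)

lemma U2_nonpos: "U2 x w w \<le> 0"
proof -
  have "0 \<le> (hpart x \<bullet> hpart w) * (hpart x \<bullet> hpart w)" by simp
  moreover have "0 \<le> (hpart x \<bullet> hpart x) * (hpart w \<bullet> hpart w)" by simp
  moreover have "0 \<le> vpart w * vpart w" by simp
  moreover have "U2 x w w = - (8 * ((hpart x \<bullet> hpart w) * (hpart x \<bullet> hpart w))
     + 4 * ((hpart x \<bullet> hpart x) * (hpart w \<bullet> hpart w)) + 8 * (vpart w * vpart w))"
    by (simp add: U2_def mult.assoc)
  ultimately show ?thesis by linarith
qed

lemma Fmc_eq2: "Fmc q N = - (trace N - (q \<bullet> (N *v q)) / (q \<bullet> q))"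
proof -
  have "(q /\<^sub>R norm q) \<bullet> (N *v (q /\<^sub>R norm q)) = (q \<bullet> (N *v q)) / (norm q)^2"
    by (simp add: matrix_vector_mult_scaleR power2_eq_square field_simps)
  then show ?thesis unfolding Fmc_eq by (simp add: power2_norm_eq_inner)
qed

lemma time_fermat:
  assumes S: "\<And>s. 0 < s \<Longrightarrow> (x, s) \<in> S" and t: "0 < t"
    and e: "e > 0" "\<forall>w\<in>S. dist w (x, t) < e \<longrightarrow> P (x, t) (w::('a::metric_space \<times> real))"
  shows "\<exists>d>0. \<forall>s. \<bar>t - s\<bar> < d \<longrightarrow> P (x, t) (x, s)"
proof (intro exI[of _ "min e t"] conjI allI impI)
  show "0 < min e t" using e t by simp
  fix s assume s: "\<bar>t - s\<bar> < min e t"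
  then have "0 < s" by linarith
  moreover have "dist (x, s) (x, t) < e" using s by (simp add: dist_Pair_Pair dist_real_def abs_minus_commute)
  ultimately show "P (x, t) (x, s)" using e S by blast
qed

lemma space_min:
  assumes S: "open S" "(x, t) \<in> S"
    and e: "e > 0" "\<forall>w\<in>S. dist w (x, t) < e \<longrightarrow> P (x, t) w"
  shows "\<exists>e'>0. \<forall>y. dist y x < e' \<longrightarrow> P (x, t) (y, t)"
proof -
  have oU: "open {y. (y, t) \<in> S}"
  proof -
    have "{y. (y, t) \<in> S} = (\<lambda>y. (y, t)) -` S" by auto
    then show "open {y. (y, t) \<in> S}"
      using continuous_open_vimage[OF S(1), of "\<lambda>y. (y, t)"] by (simp add: continuous_intros)
  qed
  have xin: "x \<in> {y. (y, t) \<in> S}" using S(2) by simp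
  obtain r where r: "r > 0" "ball x r \<subseteq> {y. (y, t) \<in> S}"
    by (rule openE[OF oU xin])
  show ?thesis
  proof (intro exI[of _ "min e r"] conjI allI impI)
    show "0 < min e r" using e r by simp
    fix y assume y: "dist y x < min e r"
    then have "(y, t) \<in> S" using r by (auto simp: dist_commute)
    moreover have "dist (y, t) (x, t) < e" using y by (simp add: dist_Pair_Pair)
    ultimately show "P (x, t) (y, t)" using e by blast
  qed
qed



lemma super_uf:
  fixes B :: "real^'m::finite^'m"
  assumes c0: "0 \<le> c"
  shows "visc_super B (uf c r) {(x, t). 0 < t}"
  unfolding visc_super_def
proof (intro conjI allI impI)
  let ?S = "{(x::real^('m option), t::real). 0 < t}"
  show "lsc_on ?S (uf c r)" by (rule lsc_uf)
  fix \<phi> x t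
  assume H: "C2_on ?S \<phi> \<and> (x, t) \<in> ?S \<and> local_min_on ?S (\<lambda>(y, s). uf c r y s - \<phi> y s) (x, t)"
  have oS: "open ?S"
  proof -
    have "?S = {z. 0 < snd z}" by auto
    moreover have "open {z::(real^('m option)) \<times> real. 0 < snd z}"
      by (intro open_Collect_less continuous_intros)
    ultimately show ?thesis by simp
  qed
  have xS: "(x, t) \<in> ?S" and t0: "0 < t" and C2: "C2_on ?S \<phi>" using H by auto
  obtain F1 F2 Dt where
    d1: "\<forall>y\<in>{y. (y, t) \<in> ?S}. ((\<lambda>y. \<phi> y t) has_derivative F1 y) (at y)"
    and d2: "\<And>v. ((\<lambda>y. F1 y v) has_derivative (\<lambda>w. F2 w v)) (at x)"
    and l1: "\<And>w. linear (\<lambda>v. F2 w v)" and l2: "\<And>v. linear (\<lambda>w. F2 w v)"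
    and gx: "grad \<phi> x t = (\<chi> i. F1 x (axis i 1))"
    and hx: "hess \<phi> x t = (\<chi> i j. F2 (axis j 1) (axis i 1))"
    and sym: "transpose (hess \<phi> x t) = hess \<phi> x t"
    and dt: "((\<lambda>s. \<phi> x s) has_real_derivative Dt) (at t)" and dtime: "dtime \<phi> x t = Dt"
    using phi_data[OF oS xS C2] by blast
  obtain e where e: "e > 0" "\<forall>w\<in>?S. dist w (x, t) < e \<longrightarrow>
      (\<lambda>(y, s). uf c r y s - \<phi> y s) (x, t) \<le> (\<lambda>(y, s). uf c r y s - \<phi> y s) w"
    using H unfolding local_min_on_def by blast
  obtain d where d: "d > 0" "\<forall>s. \<bar>t - s\<bar> < d \<longrightarrow> uf c r x t - \<phi> x t \<le> uf c r x s - \<phi> x s"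
    using time_fermat[of x ?S t e "\<lambda>a b. (\<lambda>(y, s). uf c r y s - \<phi> y s) a \<le> (\<lambda>(y, s). uf c r y s - \<phi> y s) b"] t0 e
    by auto
  have "c - Dt = 0"
    by (rule DERIV_local_min[OF DERIV_diff[OF duf_t dt] d(1)]) (use d(2) in auto)
  then have Dtc: "Dt = c" by simp
  obtain e' where e': "e' > 0" "\<forall>y. dist y x < e' \<longrightarrow> uf c r x t - \<phi> x t \<le> uf c r y t - \<phi> y t"
    using space_min[OF oS xS e(1), of "\<lambda>a b. (\<lambda>(y, s). uf c r y s - \<phi> y s) a \<le> (\<lambda>(y, s). uf c r y s - \<phi> y s) b"] e(2)
    by auto
  have oU: "open {y. (y, t) \<in> ?S}" using t0 by simp
  have xU: "x \<in> {y. (y, t) \<in> ?S}" using t0 by simp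
  have so: "0 \<le> U2 x w w - F2 w w" for w
  proof (rule second_order_min[OF oU xU, where f="\<lambda>y. uf c r y t - \<phi> y t" and f'="\<lambda>y h. U1 y h - F1 y h" and ff="\<lambda>v h. U2 x v h - F2 v h"])
    show "\<forall>y\<in>{y. (y, t) \<in> ?S}. ((\<lambda>y. uf c r y t - \<phi> y t) has_derivative (\<lambda>h. U1 y h - F1 y h)) (at y)"
      using d1 uf_der1 by (auto intro!: has_derivative_diff)
    show "((\<lambda>y. U1 y w - F1 y w) has_derivative (\<lambda>v. U2 x v w - F2 v w)) (at x)"
      by (intro has_derivative_diff uf_der2 d2)
    show "\<exists>e>0. \<forall>y. dist y x < e \<longrightarrow> uf c r x t - \<phi> x t \<le> uf c r y t - \<phi> y t"
      using e' by blast
  qed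
  define A where "A = hess \<phi> x t"
  define M where "M = transpose (sigma B x) ** A ** sigma B x"
  have nsd: "v \<bullet> (M *v v) \<le> 0" for v
  proof -
    have "v \<bullet> (M *v v) = (sigma B x *v v) \<bullet> (A *v (sigma B x *v v))" unfolding M_def by (rule qf_sandwich)
    also have "\<dots> = F2 (sigma B x *v v) (sigma B x *v v)" unfolding A_def hx by (rule qf_bilin[OF l1 l2])
    also have "\<dots> \<le> U2 x (sigma B x *v v) (sigma B x *v v)" using so by (simp add: algebra_simps)
    also have "\<dots> \<le> 0" by (rule U2_nonpos)
    finally show ?thesis .
  qed
  have G: "0 \<le> G_upper B (x, t, grad \<phi> x t, A)"
  proof (rule G_upper_ge)
    fix e :: real assume "e > 0"
    then obtain p' where p': "dist p' (grad \<phi> x t) < e" "p' v* sigma B x \<noteq> 0"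
      using witness[where e=e and B=B and x=x and p="grad \<phi> x t"] by blast
    have "(x, t, p', A) \<in> Gdom B" using t0 p' sym by (simp add: Gdom_def A_def)
    moreover have "dist (x, t, p', A) (x, t, grad \<phi> x t, A) < e" using p' by (simp add: dist_jet)
    moreover have "0 \<le> Gop B (x, t, p', A)"
      unfolding Gop_at M_def[symmetric] by (rule Fmc_nsd[OF nsd p'(2)])
    ultimately show "\<exists>w\<in>Gdom B. dist w (x, t, grad \<phi> x t, A) < e \<and> 0 \<le> Gop B w" by blast
  qed
  show "0 \<le> dtime \<phi> x t + G_upper B (x, t, grad \<phi> x t, hess \<phi> x t)"
    using G c0 unfolding dtime Dtc A_def by simp
qed

lemma hpart_cont_on [continuous_intros]: "continuous_on S f \<Longrightarrow> continuous_on S (\<lambda>x. hpart (f x))"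
  by (rule bounded_linear.continuous_on[OF bl_hpart])

lemma vpart_sigma0: "hpart x = 0 \<Longrightarrow> vpart (sigma B x *v v) = 0"
  by (simp add: vpart_def matrix_vector_mult_def sigma_def)

lemma U2_h0: "hpart x = 0 \<Longrightarrow> U2 x w w = - (8 * vpart w * vpart w)"
  by (simp add: U2_def)

lemma sub_uf:
  fixes B :: "real^'m::finite^'m"
  assumes B: "transpose B = - B" "invertible B" "matrix_inv B = - B" and c0: "c < 0"
  shows "visc_sub B (uf c r) {(x, t). norm (hpart x) < sqrt (- c / (4 * real (CARD('m) + 1))) \<and> 0 < t}"
  unfolding visc_sub_def
proof (intro conjI allI impI)
  let ?K = "sqrt (- c / (4 * real (CARD('m) + 1)))"
  let ?S = "{(x::real^('m option), t::real). norm (hpart x) < ?K \<and> 0 < t}"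
  show "usc_on ?S (uf c r)" by (rule usc_uf)
  fix \<phi> x t
  assume H: "C2_on ?S \<phi> \<and> (x, t) \<in> ?S \<and> local_max_on ?S (\<lambda>(y, s). uf c r y s - \<phi> y s) (x, t)"
  have oS: "open ?S"
  proof -
    have "?S = {z. norm (hpart (fst z)) < ?K} \<inter> {z. 0 < snd z}" by auto
    moreover have "open {z::(real^('m option)) \<times> real. norm (hpart (fst z)) < ?K}"
      by (intro open_Collect_less continuous_intros)
    moreover have "open {z::(real^('m option)) \<times> real. 0 < snd z}"
      by (intro open_Collect_less continuous_intros)
    ultimately show ?thesis by (simp add: open_Int)
  qed
  have xS: "(x, t) \<in> ?S" and t0: "0 < t" and C2: "C2_on ?S \<phi>" and hK: "norm (hpart x) < ?K"
    using H by auto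
  obtain F1 F2 Dt where
    d1: "\<forall>y\<in>{y. (y, t) \<in> ?S}. ((\<lambda>y. \<phi> y t) has_derivative F1 y) (at y)"
    and d2: "\<And>v. ((\<lambda>y. F1 y v) has_derivative (\<lambda>w. F2 w v)) (at x)"
    and l1: "\<And>w. linear (\<lambda>v. F2 w v)" and l2: "\<And>v. linear (\<lambda>w. F2 w v)"
    and gx: "grad \<phi> x t = (\<chi> i. F1 x (axis i 1))"
    and hx: "hess \<phi> x t = (\<chi> i j. F2 (axis j 1) (axis i 1))"
    and sym: "transpose (hess \<phi> x t) = hess \<phi> x t"
    and dt: "((\<lambda>s. \<phi> x s) has_real_derivative Dt) (at t)" and dtime: "dtime \<phi> x t = Dt"
    using phi_data[OF oS xS C2] by blast
  obtain e where e: "e > 0" "\<forall>w\<in>?S. dist w (x, t) < e \<longrightarrow>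
      (\<lambda>(y, s). uf c r y s - \<phi> y s) w \<le> (\<lambda>(y, s). uf c r y s - \<phi> y s) (x, t)"
    using H unfolding local_max_on_def by blast
  have Sx: "\<And>s. 0 < s \<Longrightarrow> (x, s) \<in> ?S" using hK by simp
  obtain d where d: "d > 0" "\<forall>s. \<bar>t - s\<bar> < d \<longrightarrow> uf c r x s - \<phi> x s \<le> uf c r x t - \<phi> x t"
    using time_fermat[of x ?S t e "\<lambda>a b. (\<lambda>(y, s). uf c r y s - \<phi> y s) b \<le> (\<lambda>(y, s). uf c r y s - \<phi> y s) a"] Sx t0 e
    by auto
  have "c - Dt = 0"
    by (rule DERIV_local_max[OF DERIV_diff[OF duf_t dt] d(1)]) (use d(2) in auto)
  then have Dtc: "Dt = c" by simp
  obtain e' where e': "e' > 0" "\<forall>y. dist y x < e' \<longrightarrow> uf c r y t - \<phi> y t \<le> uf c r x t - \<phi> x t"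
    using space_min[OF oS xS e(1), of "\<lambda>a b. (\<lambda>(y, s). uf c r y s - \<phi> y s) b \<le> (\<lambda>(y, s). uf c r y s - \<phi> y s) a"] e(2)
    by auto
  have oU: "open {y. (y, t) \<in> ?S}"
  proof -
    have "{y. (y, t) \<in> ?S} = (\<lambda>y. (y, t)) -` ?S" by auto
    then show ?thesis using continuous_open_vimage[OF oS, of "\<lambda>y. (y, t)"] by (simp add: continuous_intros)
  qed
  have xU: "x \<in> {y. (y, t) \<in> ?S}" using xS by simp
  have d1': "\<forall>y\<in>{y. (y, t) \<in> ?S}. ((\<lambda>y. \<phi> y t - uf c r y t) has_derivative (\<lambda>h. F1 y h - U1 y h)) (at y)"
    using d1 uf_der1 by (auto intro!: has_derivative_diff)
  have mn: "\<exists>e>0. \<forall>y. dist y x < e \<longrightarrow> \<phi> x t - uf c r x t \<le> \<phi> y t - uf c r y t"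
  proof (intro exI[of _ e'] conjI allI impI)
    show "0 < e'" using e' by simp
    fix y assume "dist y x < e'"
    then have "uf c r y t - \<phi> y t \<le> uf c r x t - \<phi> x t" using e' by blast
    then show "\<phi> x t - uf c r x t \<le> \<phi> y t - uf c r y t" by linarith
  qed
  have so: "0 \<le> F2 w w - U2 x w w" for w
  proof (rule second_order_min[OF oU xU d1', where ff="\<lambda>v h. F2 v h - U2 x v h"])
    show "((\<lambda>y. F1 y w - U1 y w) has_derivative (\<lambda>v. F2 v w - U2 x v w)) (at x)"
      by (intro has_derivative_diff uf_der2 d2)
    show "\<exists>e>0. \<forall>y. dist y x < e \<longrightarrow> \<phi> x t - uf c r x t \<le> \<phi> y t - uf c r y t" by (rule mn)
  qed
  have fo: "F1 x h - U1 x h = 0" for h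
    using first_order_min[OF _ mn, of "\<lambda>h. F1 x h - U1 x h"] d1' xU by blast
  have gxe: "grad \<phi> x t = grad (uf c r) x t"
    unfolding gx grad_uf using fo by (simp add: vec_eq_iff)
  define A where "A = hess \<phi> x t"
  define M where "M = transpose (sigma B x) ** A ** sigma B x"
  define N where "N = X2h B (uf c r) x t"
  have qN: "v \<bullet> (N *v v) = U2 x (sigma B x *v v) (sigma B x *v v)" for v
  proof -
    have "v \<bullet> (N *v v) = (sigma B x *v v) \<bullet> (hess (uf c r) x t *v (sigma B x *v v))"
      unfolding N_def X2h_def by (rule qf_sandwich)
    also have "\<dots> = U2 x (sigma B x *v v) (sigma B x *v v)" unfolding hess_uf by (rule qf_bilin[OF U2_lin1 U2_lin2])
    finally show ?thesis .
  qed
  have qM: "v \<bullet> (M *v v) = F2 (sigma B x *v v) (sigma B x *v v)" for v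
  proof -
    have "v \<bullet> (M *v v) = (sigma B x *v v) \<bullet> (A *v (sigma B x *v v))" unfolding M_def by (rule qf_sandwich)
    also have "\<dots> = F2 (sigma B x *v v) (sigma B x *v v)" unfolding A_def hx by (rule qf_bilin[OF l1 l2])
    finally show ?thesis .
  qed
  have MN: "0 \<le> v \<bullet> ((M - N) *v v)" for v
    using so[of "sigma B x *v v"] by (simp add: matrix_vector_mult_diff_rdistrib inner_diff_right qM qN)
  have Kpos: "0 < 4 * real (CARD('m) + 1)" by simp
  have G: "G_lower B (x, t, grad \<phi> x t, A) \<le> - c"
  proof (cases "hpart x = 0")
    case False
    define q where "q = Xh B (uf c r) x t"
    have qq: "q \<bullet> q > 0" using key_uf(1)[OF B False] by (simp add: q_def)
    then have q0: "q \<noteq> 0" by auto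
    have pq: "grad \<phi> x t v* sigma B x = q" unfolding q_def Xh_def gxe ..
    have zG: "(x, t, grad \<phi> x t, A) \<in> Gdom B" using t0 q0 sym pq by (simp add: Gdom_def A_def)
    have "Gop B (x, t, grad \<phi> x t, A) = Fmc q M" unfolding Gop_at pq M_def ..
    also have "\<dots> \<le> Fmc q N" by (rule Fmc_mono[OF MN q0])
    also have "\<dots> = 4 * real (CARD('m) + 1) * (norm (hpart x))\<^sup>2"
      unfolding Fmc_eq2 using key_uf(2)[OF B False] by (simp add: q_def N_def)
    also have "\<dots> < - c"
    proof -
      have n0: "0 \<le> norm (hpart x)" by simp
      have "(norm (hpart x))\<^sup>2 < ?K\<^sup>2" using hK n0 by (intro power_strict_mono) auto
      also have "?K\<^sup>2 = - c / (4 * real (CARD('m) + 1))"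
        using c0 Kpos by (intro real_sqrt_pow2 divide_nonneg_pos) auto
      finally have lt: "(norm (hpart x))\<^sup>2 < - c / (4 * real (CARD('m) + 1))" .
      have "4 * real (CARD('m) + 1) * (norm (hpart x))\<^sup>2 < 4 * real (CARD('m) + 1) * (- c / (4 * real (CARD('m) + 1)))"
        by (rule mult_strict_left_mono[OF lt Kpos])
      also have "\<dots> = - c" using Kpos by (simp only: times_divide_eq_right) (simp add: field_simps)
      finally show ?thesis .
    qed
    finally have "Gop B (x, t, grad \<phi> x t, A) \<le> - c" by simp
    then show ?thesis using zG by (intro G_lower_le) (metis dist_self)
  next
    case True
    have psd: "0 \<le> v \<bullet> (M *v v)" for v
    proof -
      have "v \<bullet> (N *v v) = 0" unfolding qN U2_h0[OF True] vpart_sigma0[OF True] by simp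
      then show ?thesis using MN[of v] by (simp add: matrix_vector_mult_diff_rdistrib inner_diff_right)
    qed
    show ?thesis
    proof (rule G_lower_le)
      fix e :: real assume "e > 0"
      then obtain p' where p': "dist p' (grad \<phi> x t) < e" "p' v* sigma B x \<noteq> 0"
        using witness[where e=e and B=B and x=x and p="grad \<phi> x t"] by blast
      have "(x, t, p', A) \<in> Gdom B" using t0 p' sym by (simp add: Gdom_def A_def)
      moreover have "dist (x, t, p', A) (x, t, grad \<phi> x t, A) < e" using p' by (simp add: dist_jet)
      moreover have "Gop B (x, t, p', A) \<le> - c"
      proof -
        have "Gop B (x, t, p', A) \<le> 0"
          unfolding Gop_at M_def[symmetric] by (rule Fmc_psd[OF psd p'(2)])
        then show ?thesis using c0 by simp
      qed
      ultimately show "\<exists>w\<in>Gdom B. dist w (x, t, grad \<phi> x t, A) < e \<and> Gop B w \<le> - c" by blast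
    qed
  qed
  show "dtime \<phi> x t + G_lower B (x, t, grad \<phi> x t, hess \<phi> x t) \<le> 0"
    using G unfolding dtime Dtc A_def by simp
qed

lemma part1_uf:
  fixes B :: "real^'m::finite^'m"
  assumes B: "transpose B = - B" "invertible B" "matrix_inv B = - B" and a0: "hpart x \<noteq> 0"
  shows "dtime (uf c r) x t - trace (X2h B (uf c r) x t - (X2h B (uf c r) x t ** outer (Xh B (uf c r) x t))
      /\<^sub>R (norm (Xh B (uf c r) x t))\<^sup>2) = c + 4 * real (CARD('m) + 1) * (norm (hpart x))\<^sup>2"
proof -
  define q where "q = Xh B (uf c r) x t"
  define M where "M = X2h B (uf c r) x t"
  have "trace (M - (M ** outer q) /\<^sub>R (norm q)\<^sup>2) = trace M - (q \<bullet> (M *v q)) / (q \<bullet> q)"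
    by (simp add: trace_sub trace_scaleR trace_outer power2_norm_eq_inner divide_inverse mult.commute)
  then show ?thesis
    using key_uf(2)[OF B a0, of c r t] unfolding q_def M_def dtime_uf by simp
qed


theorem mainTheorem6:
  fixes B :: "real^'m::finite^'m" and c r :: real
  assumes m2: "CARD('m) \<ge> 2"
    and B_skew: "transpose B = - B"
    and B_inv: "invertible B" "matrix_inv B = - B"
  defines "u \<equiv> (\<lambda>(x::real^('m option)) (t::real).
              c * t - ((norm (hpart x)) ^ 4 + 4 * (vpart x) ^ 2) + r)"
  shows "(\<forall>x t. hpart x \<noteq> 0 \<longrightarrow>
            dtime u x t - trace (X2h B u x t - (X2h B u x t ** outer (Xh B u x t)) /\<^sub>R (norm (Xh B u x t))\<^sup>2)
              = c + 4 * real (CARD('m) + 1) * (norm (hpart x))\<^sup>2)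
       \<and> (c \<ge> 0 \<longrightarrow> visc_super B u {(x, t). 0 < t})
       \<and> (c < 0 \<longrightarrow> visc_sub B u {(x, t). norm (hpart x) < sqrt (- c / (4 * real (CARD('m) + 1))) \<and> 0 < t})"
proof -
  have ueq: "u = uf c r" unfolding u_def uf_def by simp
  show ?thesis unfolding ueq
  proof (intro conjI allI impI)
    fix x t assume "hpart (x::real^('m option)) \<noteq> 0"
    then show "dtime (uf c r) x t - trace (X2h B (uf c r) x t - (X2h B (uf c r) x t ** outer (Xh B (uf c r) x t))
      /\<^sub>R (norm (Xh B (uf c r) x t))\<^sup>2) = c + 4 * real (CARD('m) + 1) * (norm (hpart x))\<^sup>2"
      by (rule part1_uf[OF B_skew B_inv])
  next
    assume "0 \<le> c"
    then show "visc_super B (uf c r) {(x, t). 0 < t}" by (rule super_uf)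
  next
    assume "c < 0"
    then show "visc_sub B (uf c r) {(x, t). norm (hpart x) < sqrt (- c / (4 * real (CARD('m) + 1))) \<and> 0 < t}"
      by (rule sub_uf[OF B_skew B_inv])
  qed
qed

end
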